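(* Let $H$ be a real Hilbert space and consider the problem $$\text{minimize } J(x):=a_J\|x\|^2+2\langle b_J,x\rangle+c_J\quad\text{subject to}\quad f_k(x):=a_k\|x\|^2+2\langle b_k,x\rangle+c_k\le 0,\ k=1,\dots,m,$$ with $a_J,a_k,c_J,c_k\in\mathbb{R}$ and $b_J,b_k\in H$. Let $x^*$ be a global minimizer of this problem, set $a_0:=a_J$, $b_0:=b_J$, $c_0:=c_J-J(x^* )$, so that $f_0(x):=J(x)-J(x^* )=a_0\|x\|^2+2\langle b_0,x\rangle+c_0$, and define $$\Omega_0:=\{(f_0(x),f_1(x),\dots,f_m(x))\mid x\in H\}+\operatorname{int}\mathbb{R}^{m+1}_+ .$$ Suppose that one of the following holds: (1) $H$ is infinite dimensional; (2) $H$ has finite dimension $n\in\mathbb{N}$ and every maximal linearly independent subset of $\{b_0,b_1,\dots,b_m\}$ has cardinality $\bar m<n$. Then $\Omega_0$ is convex.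
   Context: $\|\cdot\|$ is the norm induced by the inner product of $H$. $\operatorname{int}\mathbb{R}^{m+1}_+$ is the set of vectors in $\mathbb{R}^{m+1}$ with strictly positive components and $+$ is the Minkowski sum. *)

theory Defs
  imports "HOL-Analysis.Analysis"
begin

definition quadf :: "real \<Rightarrow> 'a::real_inner \<Rightarrow> real \<Rightarrow> 'a \<Rightarrow> real" where
  "quadf a b c x = a * (norm x)^2 + 2 * (b \<bullet> x) + c"

text \<open>Vectors of R^(m+1) are represented as functions nat => real, indexed by 0..m,
  and vanishing outside {0..m}.  The set
  Omega = {(F 0 x, ..., F m x) | x} + int R^(m+1)_+.\<close>
definition Omega_set :: "nat \<Rightarrow> (nat \<Rightarrow> 'a \<Rightarrow> real) \<Rightarrow> (nat \<Rightarrow> real) set" where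
  "Omega_set m F = {y. \<exists>x z. (\<forall>k\<le>m. 0 < z k) \<and>
                          (\<forall>k. y k = (if k \<le> m then F k x + z k else 0))}"

definition convex_fun_set :: "(nat \<Rightarrow> real) set \<Rightarrow> bool" where
  "convex_fun_set S \<longleftrightarrow> (\<forall>u\<in>S. \<forall>v\<in>S. \<forall>t::real. 0 \<le> t \<and> t \<le> 1 \<longrightarrow>
                              (\<lambda>k. (1 - t) * u k + t * v k) \<in> S)"

end

theory Submission
  imports Defs
begin

lemma proj_exists:
  fixes B :: "'a::real_inner set"
  assumes "finite B"
  shows "\<forall>y. \<exists>p\<in>span B. \<forall>b\<in>B. (y - p) \<bullet> b = 0"
  using assms
proof (induction B rule: finite_induct)
  case empty
  then show ?case using span_zero by blast
next
  case (insert b B)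
  have orthspan: "v \<bullet> q = 0" if "q \<in> span B" "\<forall>b\<in>B. v \<bullet> b = 0" for v q
    using orthogonal_to_span[of q B v] that unfolding orthogonal_def by blast
  show ?case
  proof
    fix y
    obtain pb where pb: "pb \<in> span B" "\<forall>c\<in>B. (b - pb) \<bullet> c = 0" using insert.IH by blast
    obtain py where py: "py \<in> span B" "\<forall>c\<in>B. (y - py) \<bullet> c = 0" using insert.IH by blast
    define b' where "b' = b - pb"
    define r where "r = y - py"
    show "\<exists>p\<in>span (insert b B). \<forall>c\<in>insert b B. (y - p) \<bullet> c = 0"
    proof (cases "b' = 0")
      case True
      then have "b \<in> span B" using pb b'_def by simp
      then have "(y - py) \<bullet> b = 0" using orthspan py by blast
      moreover have "py \<in> span (insert b B)" using py span_mono[of B "insert b B"] by blast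
      ultimately show ?thesis using py by blast
    next
      case False
      define c where "c = (r \<bullet> b') / (b' \<bullet> b')"
      define p where "p = py + c *\<^sub>R b'"
      have bb: "b' \<bullet> b' \<noteq> 0" using False by simp
      have p_in: "p \<in> span (insert b B)"
        unfolding p_def b'_def
        using py pb span_mono[of B "insert b B"]
        by (meson span_add span_base span_diff span_scale insertI1 subset_insertI subsetD)
      have ymp: "y - p = r - c *\<^sub>R b'" unfolding p_def r_def by simp
      have oB: "(y - p) \<bullet> q = 0" if "q \<in> B" for q
        using that py pb unfolding ymp r_def b'_def by (simp add: inner_diff_left)
      have ob': "(y - p) \<bullet> b' = 0" unfolding ymp c_def using bb by (simp add: inner_diff_left)
      have "(y - p) \<bullet> pb = 0" using orthspan[OF pb(1)] oB by blast
      then have "(y - p) \<bullet> b = 0" using ob' unfolding b'_def by (simp add: inner_diff_right)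
      then show ?thesis using p_in oB by blast
    qed
  qed
qed

lemma orth_exists:
  fixes B :: "'a::real_inner set"
  assumes "finite B" "span B \<noteq> UNIV"
  shows "\<exists>e. norm e = 1 \<and> (\<forall>b\<in>B. b \<bullet> e = 0)"
proof -
  obtain y where y: "y \<notin> span B" using assms(2) by blast
  obtain p where p: "p \<in> span B" "\<forall>b\<in>B. (y - p) \<bullet> b = 0" using proj_exists[OF assms(1)] by blast
  have ne: "y - p \<noteq> 0" using y p(1) by auto
  define e where "e = (1 / norm (y - p)) *\<^sub>R (y - p)"
  have "norm e = 1" using ne unfolding e_def by simp
  moreover have "\<forall>b\<in>B. b \<bullet> e = 0" using p(2) unfolding e_def by (simp add: inner_commute)
  ultimately show ?thesis by blast
qed

lemma norm_combo:
  fixes x y :: "'a::real_inner"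
  assumes "0 \<le> t" "t \<le> 1"
  shows "(norm ((1 - t) *\<^sub>R x + t *\<^sub>R y))^2 + t * (1 - t) * (norm (x - y))^2
        = (1 - t) * (norm x)^2 + t * (norm y)^2"
  unfolding power2_norm_eq_inner
  by (simp add: inner_add_left inner_add_right inner_diff_left inner_diff_right
      inner_commute algebra_simps power2_eq_square)

lemma hit_norm:
  fixes p e :: "'a::real_inner"
  assumes "norm e = 1" "0 \<le> d"
  shows "\<exists>s. (norm (p + s *\<^sub>R e))^2 = (norm p)^2 + d"
proof -
  define c where "c = p \<bullet> e"
  define s where "s = - c + sqrt (c^2 + d)"
  have ee: "e \<bullet> e = 1" using assms(1) by (simp add: dot_square_norm)
  have sq: "(sqrt (c^2 + d))^2 = c^2 + d" using assms(2) by simp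
  have "(norm (p + s *\<^sub>R e))^2 = (norm p)^2 + 2 * s * c + s^2"
    unfolding power2_norm_eq_inner c_def
    by (simp add: inner_add_left inner_add_right ee inner_commute algebra_simps power2_eq_square)
  moreover have "2 * s * c + s^2 = d" unfolding s_def using sq
    by (simp add: algebra_simps power2_eq_square)
  ultimately have "(norm (p + s *\<^sub>R e))^2 = (norm p)^2 + d" by simp
  then show ?thesis by blast
qed

lemma quad_combo:
  fixes x y w p e :: "'a::real_inner"
  assumes "bb \<bullet> e = 0" "w = p + s *\<^sub>R e" "p = (1 - t) *\<^sub>R x + t *\<^sub>R y"
    "(norm w)^2 = (1 - t) * (norm x)^2 + t * (norm y)^2"
  shows "quadf A bb C w = (1 - t) * quadf A bb C x + t * quadf A bb C y"
proof -
  have "bb \<bullet> w = (1 - t) * (bb \<bullet> x) + t * (bb \<bullet> y)"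
    using assms(1-3) by (simp add: inner_add_right)
  then show ?thesis unfolding quadf_def assms(4) by (simp add: algebra_simps)
qed

theorem theorem4p1:
  fixes aJ cJ :: real and bJ :: "'a::{real_inner, complete_space}"
    and a c :: "nat \<Rightarrow> real" and b :: "nat \<Rightarrow> 'a" and m :: nat and xs :: 'a
  assumes feas: "\<forall>k\<in>{1..m}. quadf (a k) (b k) (c k) xs \<le> 0"
    and glob: "\<forall>x. (\<forall>k\<in>{1..m}. quadf (a k) (b k) (c k) x \<le> 0)
                   \<longrightarrow> quadf aJ bJ cJ xs \<le> quadf aJ bJ cJ x"
    and dimcond:
      "(\<not> (\<exists>B::'a set. finite B \<and> span B = UNIV))
       \<or> ((\<exists>B::'a set. finite B \<and> span B = UNIV) \<and>
          (\<forall>S. S \<subseteq> insert bJ (b ` {1..m}) \<and> independent S \<and>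
               (\<forall>T. S \<subset> T \<and> T \<subseteq> insert bJ (b ` {1..m}) \<longrightarrow> dependent T)
               \<longrightarrow> card S < dim (UNIV::'a set)))"
  shows "convex_fun_set (Omega_set m (\<lambda>k x. if k = 0
            then quadf aJ bJ (cJ - quadf aJ bJ cJ xs) x
            else quadf (a k) (b k) (c k) x))"
proof -
  define BB where "BB = insert bJ (b ` {1..m})"
  have finB: "finite BB" unfolding BB_def by simp
  have spanB: "span BB \<noteq> UNIV"
    using dimcond
  proof
    assume "\<not> (\<exists>B::'a set. finite B \<and> span B = UNIV)"
    then show ?thesis using finB by blast
  next
    assume h: "(\<exists>B::'a set. finite B \<and> span B = UNIV) \<and>
          (\<forall>S. S \<subseteq> insert bJ (b ` {1..m}) \<and> independent S \<and>
               (\<forall>T. S \<subset> T \<and> T \<subseteq> insert bJ (b ` {1..m}) \<longrightarrow> dependent T)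
               \<longrightarrow> card S < dim (UNIV::'a set))"
    obtain S where S: "{} \<subseteq> S" "S \<subseteq> BB" "independent S" "BB \<subseteq> span S"
      using maximal_independent_subset_extend[of "{}" BB] independent_empty by auto
    have maxS: "\<forall>T. S \<subset> T \<and> T \<subseteq> BB \<longrightarrow> dependent T"
    proof (intro allI impI)
      fix T assume T: "S \<subset> T \<and> T \<subseteq> BB"
      then obtain v where v: "v \<in> T" "v \<notin> S" by blast
      have "v \<in> span S" using v T S(4) by blast
      then have "v \<in> span (T - {v})" using v span_mono[of S "T - {v}"] T by blast
      then show "dependent T" using v(1) unfolding dependent_def by blast
    qed
    have "card S < dim (UNIV::'a set)" using h S(2,3) maxS unfolding BB_def by blast
    moreover have "span S = span BB"
      using S(2,4) by (metis span_mono span_span subset_antisym)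
    ultimately show ?thesis using dim_eq_card[of S UNIV] S(3) by auto
  qed
  obtain e where e: "norm e = 1" "\<forall>q\<in>BB. q \<bullet> e = 0" using orth_exists[OF finB spanB] by blast
  show ?thesis
    unfolding convex_fun_set_def
  proof (intro ballI allI impI)
    fix u v t
    assume u: "u \<in> Omega_set m (\<lambda>k x. if k = 0
            then quadf aJ bJ (cJ - quadf aJ bJ cJ xs) x
            else quadf (a k) (b k) (c k) x)"
      and v: "v \<in> Omega_set m (\<lambda>k x. if k = 0
            then quadf aJ bJ (cJ - quadf aJ bJ cJ xs) x
            else quadf (a k) (b k) (c k) x)"
      and t: "0 \<le> t \<and> t \<le> (1::real)"
    obtain x z where xz: "\<forall>k\<le>m. 0 < z k" "\<forall>k. u k = (if k \<le> m then (if k = 0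
            then quadf aJ bJ (cJ - quadf aJ bJ cJ xs) x
            else quadf (a k) (b k) (c k) x) + z k else 0)"
      using u unfolding Omega_set_def by auto
    obtain y z' where yz: "\<forall>k\<le>m. 0 < z' k" "\<forall>k. v k = (if k \<le> m then (if k = 0
            then quadf aJ bJ (cJ - quadf aJ bJ cJ xs) y
            else quadf (a k) (b k) (c k) y) + z' k else 0)"
      using v unfolding Omega_set_def by auto
    define p where "p = (1 - t) *\<^sub>R x + t *\<^sub>R y"
    have d0: "0 \<le> t * (1 - t) * (norm (x - y))^2" using t by simp
    obtain s where s: "(norm (p + s *\<^sub>R e))^2 = (norm p)^2 + t * (1 - t) * (norm (x - y))^2"
      using hit_norm[OF e(1) d0] by blast
    define w where "w = p + s *\<^sub>R e"
    have nw: "(norm w)^2 = (1 - t) * (norm x)^2 + t * (norm y)^2"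
      using s norm_combo[of t x y] t unfolding w_def p_def by simp
    have Q: "quadf A q C w = (1 - t) * quadf A q C x + t * quadf A q C y" if "q \<in> BB" for A q C
      using quad_combo[of q e w p s t x y A C] e(2) that w_def p_def nw by blast
    define z'' where "z'' = (\<lambda>k. (1 - t) * z k + t * z' k)"
    have zpos: "\<forall>k\<le>m. 0 < z'' k"
    proof (intro allI impI)
      fix k assume "k \<le> m"
      then have "0 < z k" "0 < z' k" using xz yz by auto
      then show "0 < z'' k" unfolding z''_def using t
        by (cases "t = 0") (auto intro: add_nonneg_pos add_pos_nonneg)
    qed
    have "\<forall>k. (1 - t) * u k + t * v k = (if k \<le> m then (if k = 0
            then quadf aJ bJ (cJ - quadf aJ bJ cJ xs) w
            else quadf (a k) (b k) (c k) w) + z'' k else 0)"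
    proof
      fix k
      show "(1 - t) * u k + t * v k = (if k \<le> m then (if k = 0
            then quadf aJ bJ (cJ - quadf aJ bJ cJ xs) w
            else quadf (a k) (b k) (c k) w) + z'' k else 0)"
      proof (cases "k \<le> m")
        case True
        show ?thesis
        proof (cases "k = 0")
          case True
          have "bJ \<in> BB" unfolding BB_def by simp
          then show ?thesis using Q[of bJ aJ "cJ - quadf aJ bJ cJ xs"] xz(2) yz(2) True \<open>k \<le> m\<close>
            unfolding z''_def by (simp add: algebra_simps)
        next
          case False
          have "b k \<in> BB" unfolding BB_def using False \<open>k \<le> m\<close> by simp
          then show ?thesis using Q[of "b k" "a k" "c k"] xz(2) yz(2) False \<open>k \<le> m\<close>
            unfolding z''_def by (simp add: algebra_simps)
        qed
      next
        case False
        then show ?thesis using xz(2) yz(2) by simp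
      qed
    qed
    then show "(\<lambda>k. (1 - t) * u k + t * v k) \<in> Omega_set m (\<lambda>k x. if k = 0
            then quadf aJ bJ (cJ - quadf aJ bJ cJ xs) x
            else quadf (a k) (b k) (c k) x)"
      unfolding Omega_set_def using zpos by blast
  qed
qed

end
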